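(* If $M\le 2N-2$, then for every $M$-element frame $\mathcal F$ for $\mathbb R^N$ the map $\mathbb M^{\mathcal F}$ is not injective.
   Context: A frame for $\mathbb R^N$ is a spanning family $\{f_1,\dots,f_M\}$. $\mathbb M^{\mathcal F}:\mathbb R^N/\{\pm1\}\to\mathbb R^M$, $\hat x\mapsto(|\langle x,f_k\rangle|)_k$; injectivity means $|\langle x,f_k\rangle|=|\langle y,f_k\rangle|$ for all $k$ implies $y=\pm x$. *)

theory Defs
  imports "HOL-Analysis.Analysis"
begin

definition is_frame :: "nat \<Rightarrow> (nat \<Rightarrow> real ^ 'n) \<Rightarrow> bool" where
  "is_frame M f \<longleftrightarrow> span (f ` {..<M}) = UNIV"

text \<open>Injectivity of the phaseless map on R^N / {+-1}:
  equal absolute frame coefficients imply y = x or y = -x.\<close>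
definition phase_retrievable :: "nat \<Rightarrow> (nat \<Rightarrow> real ^ 'n) \<Rightarrow> bool" where
  "phase_retrievable M f \<longleftrightarrow>
     (\<forall>x y :: real ^ 'n. (\<forall>k<M. \<bar>x \<bullet> f k\<bar> = \<bar>y \<bullet> f k\<bar>) \<longrightarrow> y = x \<or> y = - x)"

end

theory Submission
  imports Defs
begin

lemma orth_exists:
  fixes f :: "nat \<Rightarrow> real ^ 'n"
  assumes "card A < CARD('n)" "finite A"
  obtains u where "u \<noteq> 0" "\<And>k. k \<in> A \<Longrightarrow> u \<bullet> f k = 0"
proof -
  have "dim (f ` A) \<le> card (f ` A)"
    by (rule dim_le_card) (auto intro: span_base simp: assms)
  also have "\<dots> \<le> card A" using assms(2) by (rule card_image_le)
  finally have "dim (f ` A) < DIM(real ^ 'n)" using assms(1) by simp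
  then obtain u where "u \<noteq> 0" "\<And>y. y \<in> span (f ` A) \<Longrightarrow> orthogonal u y"
    using orthogonal_to_subspace_exists by blast
  moreover have "\<And>k. k \<in> A \<Longrightarrow> f k \<in> span (f ` A)" by (simp add: span_base)
  ultimately show ?thesis using that by (metis orthogonal_def)
qed

theorem proposition2p5:
  fixes f :: "nat \<Rightarrow> real ^ 'n" and M :: nat
  assumes "M \<le> 2 * CARD('n) - 2"
    and "is_frame M f"
  shows "\<not> phase_retrievable M f"
proof
  assume pr: "phase_retrievable M f"
  let ?N = "CARD('n)"
  have "card {..<?N - 1} < ?N" by simp
  then obtain u where u: "u \<noteq> 0" "\<And>k. k \<in> {..<?N - 1} \<Longrightarrow> u \<bullet> f k = 0"
    using orth_exists[of "{..<?N - 1}" f] by auto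
  have "?N > 0" by simp
  moreover have "card {?N - 1..<M} = M - (?N - 1)" by simp
  ultimately have "card {?N - 1..<M} < ?N" using assms(1) by linarith
  then obtain v where v: "v \<noteq> 0" "\<And>k. k \<in> {?N - 1..<M} \<Longrightarrow> v \<bullet> f k = 0"
    using orth_exists[of "{?N - 1..<M}" f] by auto
  have "\<forall>k<M. \<bar>(u + v) \<bullet> f k\<bar> = \<bar>(u - v) \<bullet> f k\<bar>"
  proof (intro allI impI)
    fix k assume "k < M"
    show "\<bar>(u + v) \<bullet> f k\<bar> = \<bar>(u - v) \<bullet> f k\<bar>"
    proof (cases "k < ?N - 1")
      case True
      then show ?thesis using u(2)[of k] by (simp add: inner_add_left inner_diff_left)
    next
      case False
      then show ?thesis using v(2)[of k] \<open>k < M\<close> by (simp add: inner_add_left inner_diff_left)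
    qed
  qed
  with pr have "u - v = u + v \<or> u - v = - (u + v)"
    unfolding phase_retrievable_def by blast
  then show False
  proof
    assume "u - v = u + v" then have "2 *\<^sub>R v = 0" by (simp add: algebra_simps scaleR_2)
    with v(1) show False by simp
  next
    assume "u - v = - (u + v)" then have "2 *\<^sub>R u = 0" by (simp add: algebra_simps scaleR_2)
    with u(1) show False by simp
  qed
qed

end
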